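(* Let $\gamma>0$ or $\gamma<-1$, and let $\theta\in\mathbb R^d$. For a dataset $\mathcal D=\{(X_i,Y_i)\}_{i=1}^n\subset\mathbb R^d\times\{0,1\}$ define $$S_\gamma(\theta;\mathcal D)=\frac1n\sum_{i=1}^n\Big[\frac{\exp\{(\gamma+1)Y_i\theta^\top X_i\}}{1+\exp\{(\gamma+1)\theta^\top X_i\}}\Big]^{\frac{\gamma}{\gamma+1}}\Big\{Y_i-\frac{\exp\{(\gamma+1)\theta^\top X_i\}}{1+\exp\{(\gamma+1)\theta^\top X_i\}}\Big\}X_i.$$ Then $\sup_{\mathcal D}|\theta^\top S_\gamma(\theta;\mathcal D)|<\infty$, where the supremum is over all $n\ge1$ and all datasets $\mathcal D$.
   Context: $S_\gamma(\theta;\mathcal D)$ is the $\gamma$-estimating function (with the counting measure on $\{0,1\}$ as reference measure) for the binary logistic model $p(y|x,\theta)=\exp(y\theta^\top x)/(1+\exp(\theta^\top x))$. *)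

theory Defs
  imports "HOL-Analysis.Analysis"
begin

definition S_gamma :: "real \<Rightarrow> real^'d \<Rightarrow> nat \<Rightarrow> (nat \<Rightarrow> real^'d) \<Rightarrow> (nat \<Rightarrow> real) \<Rightarrow> real^'d" where
  "S_gamma \<gamma> \<theta> n X Y =
     (1 / real n) *\<^sub>R
       (\<Sum>i<n. ((exp ((\<gamma> + 1) * Y i * (\<theta> \<bullet> X i)) / (1 + exp ((\<gamma> + 1) * (\<theta> \<bullet> X i))))
                   powr (\<gamma> / (\<gamma> + 1))
                 * (Y i - exp ((\<gamma> + 1) * (\<theta> \<bullet> X i)) / (1 + exp ((\<gamma> + 1) * (\<theta> \<bullet> X i)))))
                *\<^sub>R X i)"

end

theory Submission
  imports Defs
begin

lemma sig_bound:
  fixes a c :: real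
  assumes c: "c > 0"
  shows "(exp a / (1 + exp a)) powr c * (1 / (1 + exp a)) \<le> exp (- (min c 1) * \<bar>a\<bar>)"
proof -
  define s where "s = exp a / (1 + exp a)"
  have pos: "0 < 1 + exp a" by (simp add: add_pos_pos)
  have s0: "0 < s" unfolding s_def using pos by simp
  have s1: "s \<le> 1" unfolding s_def using pos by (simp add: divide_le_eq_1)
  have q0: "0 < 1 / (1 + exp a)" by (simp add: add_pos_pos)
  show ?thesis
  proof (cases "a \<ge> 0")
    case True
    have "s powr c \<le> 1" using s0 s1 c by (simp add: powr_le1)
    moreover have "1 / (1 + exp a) \<le> exp (- a)"
    proof -
      have "1 / (1 + exp a) \<le> 1 / exp a" by (rule frac_le) auto
      then show ?thesis by (simp add: exp_minus inverse_eq_divide)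
    qed
    moreover have "exp (- a) \<le> exp (- (min c 1) * \<bar>a\<bar>)"
      using True using c by (simp add: min_def mult_left_le_one_le)
    ultimately have "s powr c * (1 / (1 + exp a)) \<le> 1 * exp (- a)"
      using q0 s0 by (intro mult_mono) auto
    then show ?thesis using \<open>exp (- a) \<le> _\<close> unfolding s_def by linarith
  next
    case False
    have "s \<le> exp a" unfolding s_def using pos by (simp add: divide_le_eq)
    then have "s powr c \<le> exp a powr c" using s0 c by (intro powr_mono2) auto
    also have "\<dots> = exp (c * a)" by (simp add: powr_def)
    finally have A: "s powr c \<le> exp (c * a)" .
    have B: "1 / (1 + exp a) \<le> 1" using pos by (simp add: divide_le_eq)
    have "exp (c * a) \<le> exp (- (min c 1) * \<bar>a\<bar>)"
      using False by (auto simp: min_def mult_le_cancel_right)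
    moreover have "s powr c * (1 / (1 + exp a)) \<le> exp (c * a) * 1"
      using A B q0 by (intro mult_mono) auto
    ultimately show ?thesis unfolding s_def by linarith
  qed
qed

lemma xexp_bound:
  fixes k t :: real
  assumes k: "k > 0"
  shows "\<bar>t\<bar> * exp (- k * \<bar>t\<bar>) \<le> 1 / k"
proof -
  define u where "u = k * \<bar>t\<bar>"
  have "u \<le> exp u" using exp_ge_add_one_self[of u] by linarith
  then have "u * exp (- u) \<le> 1" by (simp add: exp_minus field_simps)
  then show ?thesis using k unfolding u_def by (simp add: field_simps)
qed

lemma term_bound:
  fixes g c t y :: real
  assumes c: "c > 0" and g: "g \<noteq> 0" and y: "y \<in> {0, 1}"
  shows "\<bar>(exp (g * y * t) / (1 + exp (g * t))) powr c
           * (y - exp (g * t) / (1 + exp (g * t))) * t\<bar> \<le> 1 / (min c 1 * \<bar>g\<bar>)"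
proof -
  define a where "a = g * t"
  define m where "m = min c 1"
  have m: "m > 0" using c by (simp add: m_def)
  have k: "m * \<bar>g\<bar> > 0" using m g by simp
  have aa: "\<bar>a\<bar> = \<bar>g\<bar> * \<bar>t\<bar>" by (simp add: a_def abs_mult)
  have key: "\<bar>(exp (g * y * t) / (1 + exp a)) powr c
           * (y - exp a / (1 + exp a))\<bar> \<le> exp (- m * \<bar>a\<bar>)"
  proof (cases "y = 1")
    case True
    have "y - exp a / (1 + exp a) = 1 / (1 + exp a)"
    proof -
      have pos: "0 < 1 + exp a" by (simp add: add_pos_pos)
      have "1 - exp a / (1 + exp a) = 1 / (1 + exp a)" using pos by (simp add: field_simps)
      then show ?thesis using True by simp
    qed
    moreover have "0 < 1 / (1 + exp a)" by (simp add: add_pos_pos)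
    ultimately show ?thesis using sig_bound[OF c, of a] True
      by (simp add: a_def m_def abs_mult)
  next
    case False
    then have y0: "y = 0" using y by auto
    have e1: "1 / (1 + exp a) = exp (- a) / (1 + exp (- a))"
      by (simp add: exp_minus field_simps add_pos_pos)
    have e2: "exp a / (1 + exp a) = 1 / (1 + exp (- a))"
      by (simp add: exp_minus field_simps add_pos_pos)
    have "\<bar>(1 / (1 + exp a)) powr c * (0 - exp a / (1 + exp a))\<bar>
        = (exp (- a) / (1 + exp (- a))) powr c * (1 / (1 + exp (- a)))"
      unfolding e1 e2 by (simp add: abs_mult add_pos_pos)
    also have "\<dots> \<le> exp (- m * \<bar>a\<bar>)" using sig_bound[OF c, of "- a"] by (simp add: m_def)
    finally show ?thesis using y0 by simp
  qed
  have "\<bar>(exp (g * y * t) / (1 + exp a)) powr c * (y - exp a / (1 + exp a)) * t\<bar>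
      = \<bar>(exp (g * y * t) / (1 + exp a)) powr c * (y - exp a / (1 + exp a))\<bar> * \<bar>t\<bar>"
    by (simp add: abs_mult)
  also have "\<dots> \<le> exp (- m * \<bar>a\<bar>) * \<bar>t\<bar>"
    using key by (intro mult_right_mono) auto
  also have "\<dots> = \<bar>t\<bar> * exp (- (m * \<bar>g\<bar>) * \<bar>t\<bar>)" by (simp add: aa mult.commute mult.left_commute)
  also have "\<dots> \<le> 1 / (m * \<bar>g\<bar>)" by (rule xexp_bound[OF k])
  finally show ?thesis by (simp add: a_def m_def)
qed

theorem mainTheorem8:
  fixes \<gamma> :: real and \<theta> :: "real^'d"
  assumes "\<gamma> > 0 \<or> \<gamma> < -1"
  shows "\<exists>M::real. \<forall>(n::nat) (X::nat \<Rightarrow> real^'d) (Y::nat \<Rightarrow> real).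
            n \<ge> 1 \<longrightarrow> (\<forall>i<n. Y i \<in> {0, 1}) \<longrightarrow> \<bar>\<theta> \<bullet> S_gamma \<gamma> \<theta> n X Y\<bar> \<le> M"
proof -
  define c where "c = \<gamma> / (\<gamma> + 1)"
  define g where "g = \<gamma> + 1"
  have c: "c > 0" using assms unfolding c_def by (auto simp: divide_pos_pos divide_neg_neg)
  have g: "g \<noteq> 0" using assms unfolding g_def by auto
  define B where "B = 1 / (min c 1 * \<bar>g\<bar>)"
  show ?thesis
  proof (intro exI allI impI)
    fix n :: nat and X :: "nat \<Rightarrow> real^'d" and Y :: "nat \<Rightarrow> real"
    assume n: "n \<ge> 1" and Y: "\<forall>i<n. Y i \<in> {0, 1}"
    define f where "f i = (exp (g * Y i * (\<theta> \<bullet> X i)) / (1 + exp (g * (\<theta> \<bullet> X i)))) powr c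
           * (Y i - exp (g * (\<theta> \<bullet> X i)) / (1 + exp (g * (\<theta> \<bullet> X i)))) * (\<theta> \<bullet> X i)" for i
    have "\<theta> \<bullet> S_gamma \<gamma> \<theta> n X Y = (1 / real n) * (\<Sum>i<n. f i)"
      unfolding S_gamma_def f_def c_def g_def
      by (simp add: inner_sum_right mult.assoc)
    moreover have "\<bar>\<Sum>i<n. f i\<bar> \<le> real n * B"
    proof -
      have "\<bar>\<Sum>i<n. f i\<bar> \<le> (\<Sum>i<n. \<bar>f i\<bar>)" by (rule sum_abs)
      also have "\<dots> \<le> (\<Sum>i<n. B)"
        using Y term_bound[OF c g] unfolding f_def B_def by (intro sum_mono) auto
      finally show ?thesis by simp
    qed
    ultimately show "\<bar>\<theta> \<bullet> S_gamma \<gamma> \<theta> n X Y\<bar> \<le> B"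
    proof -
      assume e: "\<theta> \<bullet> S_gamma \<gamma> \<theta> n X Y = (1 / real n) * (\<Sum>i<n. f i)"
        and b: "\<bar>\<Sum>i<n. f i\<bar> \<le> real n * B"
      have np: "real n > 0" using n by simp
      have "\<bar>\<theta> \<bullet> S_gamma \<gamma> \<theta> n X Y\<bar> = \<bar>\<Sum>i<n. f i\<bar> / real n"
        unfolding e using np by (simp add: abs_mult)
      also have "\<dots> \<le> B" using b np by (simp add: divide_le_eq mult.commute)
      finally show ?thesis .
    qed
  qed
qed

end
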